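(* Let $n\geq7$ and let $\mathcal R(P_{n-5})=u_1,\ldots,u_p$. If $u_iu_k>_{\mathcal R}u_ju_l$ in $F(J(P_{n-5})^2)$ for some indices $i,j,k,l$, then $x_nx_{n-1}x_{n-2}^2x_{n-4}^2u_iu_k>_{\mathcal R}x_nx_{n-1}x_{n-2}^2x_{n-4}^2u_ju_l$ in $F(J(P_n)^2)$.
   Context: For $m\geq 1$, $P_m$ is the path graph on vertices $x_1,\ldots,x_m$ with edges $\{x_i,x_{i+1}\}$; $J(P_m)$ is its cover ideal (generated by $\prod_{x\in C}x$, $C$ a minimal vertex cover); $G(I)$ denotes minimal monomial generators and $F(I^2)=\{ab:a,b\in G(I)\}$. The rooted list $\mathcal R(P_m)$: $\mathcal R(P_1)$ empty; $\mathcal R(P_2)=x_1,x_2$; $\mathcal R(P_3)=x_2,x_1x_3$; $\mathcal R(P_4)=x_1x_3,x_2x_3,x_2x_4$; for $m\geq5$, if $\mathcal R(P_{m-2})=u_1,\ldots,u_r$ and $\mathcal R(P_{m-3})=v_1,\ldots,v_s$, then $\mathcal R(P_m)=x_{m-1}u_1,\ldots,x_{m-1}u_r,x_mx_{m-2}v_1,\ldots,x_mx_{m-2}v_s$; it lists each element of $G(J(P_m))$ once. With $\mathcal R(P_m)=u_1,\ldots,u_q$, each $M\in F(J(P_m)^2)$ is $u_1^{a_1}\cdots u_q^{a_q}$ with $a_i\geq0$, $\sum a_i=2$; its maximal expression is the one with lexicographically largest exponent vector, and $M>_{\mathcal R}N$ on $F(J(P_m)^2)$ iff the maximal-expression exponent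 vector of $M$ is lexicographically larger than that of $N$. *)

theory Defs
  imports "HOL-Library.Multiset" "HOL-Library.List_Lexorder"
begin

text \<open>Monomials in the variables x_1, x_2, ... are represented as multisets of
variable indices: the monomial x_1^{e_1} x_2^{e_2} ... is the multiset in which
i occurs e_i times. Multiplication of monomials is multiset sum.\<close>

type_synonym monomial = "nat multiset"

definition path_vertex_cover :: "nat \<Rightarrow> nat set \<Rightarrow> bool" where
  "path_vertex_cover m C \<longleftrightarrow> C \<subseteq> {1..m} \<and> (\<forall>i. 1 \<le> i \<and> i < m \<longrightarrow> i \<in> C \<or> Suc i \<in> C)"

definition path_min_vertex_cover :: "nat \<Rightarrow> nat set \<Rightarrow> bool" where
  "path_min_vertex_cover m C \<longleftrightarrow> path_vertex_cover m C \<and> (\<forall>D. D \<subset> C \<longrightarrow> \<not> path_vertex_cover m D)"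

text \<open>G(J(P_m)): minimal monomial generators of the cover ideal.\<close>
definition GJ :: "nat \<Rightarrow> monomial set" where
  "GJ m = {mset_set C | C. path_min_vertex_cover m C}"

definition FJ2 :: "nat \<Rightarrow> monomial set" where
  "FJ2 m = {a + b | a b. a \<in> GJ m \<and> b \<in> GJ m}"

fun rooted :: "nat \<Rightarrow> monomial list" where
  "rooted 0 = []"
| "rooted (Suc 0) = []"
| "rooted (Suc (Suc 0)) = [{#1#}, {#2#}]"
| "rooted (Suc (Suc (Suc 0))) = [{#2#}, {#1, 3#}]"
| "rooted (Suc (Suc (Suc (Suc 0)))) = [{#1, 3#}, {#2, 3#}, {#2, 4#}]"
| "rooted (Suc (Suc (Suc (Suc (Suc k))))) =
     map (\<lambda>u. add_mset (k + 4) u) (rooted (k + 3)) @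
     map (\<lambda>v. {#k + 5, k + 3#} + v) (rooted (k + 2))"

definition expr_mono :: "monomial list \<Rightarrow> nat list \<Rightarrow> monomial" where
  "expr_mono us a = sum_list (map2 (\<lambda>e u. repeat_mset e u) a us)"

definition expressions :: "monomial list \<Rightarrow> monomial \<Rightarrow> nat list set" where
  "expressions us M = {a. length a = length us \<and> sum_list a = 2 \<and> expr_mono us a = M}"

text \<open>Maximal expression: lexicographically largest exponent vector
 (lists of equal length; the order from List_Lexorder is lexicographic).\<close>
definition max_expr :: "monomial list \<Rightarrow> monomial \<Rightarrow> nat list" where
  "max_expr us M = Max (expressions us M)"

definition R_greater :: "nat \<Rightarrow> monomial \<Rightarrow> monomial \<Rightarrow> bool" where
  "R_greater m M N \<longleftrightarrow> max_expr (rooted m) N < max_expr (rooted m) M"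

end

theory Submission
  imports Defs
begin


definition vec :: "nat \<Rightarrow> nat \<Rightarrow> nat \<Rightarrow> nat list" where
  "vec q a b = map (\<lambda>t. (if t = a then 1 else 0) + (if t = b then 1 else 0)) [0..<q]"

lemma lex_witness:
  fixes xs ys :: "nat list"
  assumes "length xs = length ys" "i < length xs" "\<forall>t<i. xs!t = ys!t" "xs!i < ys!i"
  shows "xs < ys"
proof -
  have "take i xs = take i ys"
    using assms by (intro nth_equalityI) auto
  then show ?thesis using assms unfolding list_less_def lexord_take_index_conv
    by auto
qed

lemma vec_less:
  assumes "a \<le> b" "b < q" "c \<le> d" "d < q" "c < a \<or> (c = a \<and> d < b)"
  shows "vec q a b < vec q c d"
  using assms(5)
proof
  assume "c < a"
  then show ?thesis using assms
    by (intro lex_witness[where i=c]) (auto simp: vec_def)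
next
  assume "c = a \<and> d < b"
  then show ?thesis using assms
    by (intro lex_witness[where i=d]) (auto simp: vec_def)
qed

lemma vec_less_iff:
  assumes "a \<le> b" "b < q" "c \<le> d" "d < q"
  shows "vec q a b < vec q c d \<longleftrightarrow> (c < a \<or> (c = a \<and> d < b))"
proof
  assume h: "vec q a b < vec q c d"
  show "c < a \<or> (c = a \<and> d < b)"
  proof (rule ccontr)
    assume "\<not> ?thesis"
    then have "(a < c \<or> (a = c \<and> b < d)) \<or> (a = c \<and> b = d)" by auto
    then show False
    proof
      assume "a < c \<or> (a = c \<and> b < d)"
      then have "vec q c d < vec q a b" using assms by (intro vec_less) auto
      then show False using h by auto
    next
      assume "a = c \<and> b = d" then show False using h by auto
    qed
  qed
qed (use assms vec_less in auto)

lemma expr_vec: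
  assumes "length us = q" "a < q" "b < q"
  shows "expr_mono us (vec q a b) = us!a + us!b"
proof -
  have "map2 (\<lambda>e u. repeat_mset e u) (vec q a b) us
      = map (\<lambda>t. repeat_mset ((if t = a then 1 else 0) + (if t = b then 1 else 0)) (us!t)) [0..<q]"
    using assms by (intro nth_equalityI) (auto simp: vec_def)
  then have "expr_mono us (vec q a b) = (\<Sum>t\<in>{0..<q}. repeat_mset ((if t = a then 1 else 0) + (if t = b then 1 else 0)) (us!t))"
    unfolding expr_mono_def by (simp add: sum_set_upt_conv_sum_list_nat[symmetric])
  also have "\<dots> = (\<Sum>t\<in>{0..<q}. (if t = a then us!t else {#})) + (\<Sum>t\<in>{0..<q}. (if t = b then us!t else {#}))"
    by (subst sum.distrib[symmetric], rule sum.cong) auto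
  also have "\<dots> = us!a + us!b" using assms by simp
  finally show ?thesis .
qed

lemma sum1: "sum_list (v::nat list) = 1 \<Longrightarrow> \<exists>a<length v. \<forall>t<length v. v!t = (if t = a then 1 else 0)"
proof (induction v)
  case Nil then show ?case by simp
next
  case (Cons x v)
  show ?case
  proof (cases x)
    case 0
    then obtain a where "a < length v" "\<forall>t<length v. v!t = (if t = a then 1 else 0)" using Cons by auto
    then show ?thesis using 0 by (intro exI[of _ "Suc a"]) (auto simp: nth_Cons split: nat.split)
  next
    case (Suc y)
    then have "x = 1" "sum_list v = 0" using Cons.prems by auto
    then show ?thesis by (intro exI[of _ 0]) (auto simp: nth_Cons split: nat.split)
  qed
qed

lemma sum2: "sum_list (v::nat list) = 2 \<Longrightarrow> \<exists>a b. a \<le> b \<and> b < length v \<and>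
   (\<forall>t<length v. v!t = (if t = a then 1 else 0) + (if t = b then 1 else 0))"
proof (induction v)
  case Nil then show ?case by simp
next
  case (Cons x v)
  show ?case
  proof (cases "x = 0")
    case True
    then obtain a b where "a \<le> b" "b < length v" "\<forall>t<length v. v!t = (if t = a then 1 else 0) + (if t = b then 1 else 0)" using Cons by auto
    then show ?thesis using True by (intro exI[of _ "Suc a"] exI[of _ "Suc b"]) (auto simp: nth_Cons split: nat.split)
  next
    case False
    show ?thesis
    proof (cases "x = 1")
      case True
      then have "sum_list v = 1" using Cons.prems by auto
      then obtain b where "b < length v" "\<forall>t<length v. v!t = (if t = b then 1 else 0)" using sum1 by blast
      then show ?thesis using True by (intro exI[of _ 0] exI[of _ "Suc b"]) (auto simp: nth_Cons split: nat.split)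
    next
      case False
      then have "x = 2" using Cons.prems \<open>x \<noteq> 0\<close> by auto
      then have "sum_list v = 0" using Cons.prems by auto
      then have "\<forall>y\<in>set v. y = 0" by simp
      then show ?thesis using \<open>x = 2\<close> by (intro exI[of _ 0] exI[of _ 0]) (auto simp: nth_Cons split: nat.split)
    qed
  qed
qed

lemma sum2_vec: "sum_list (v::nat list) = 2 \<Longrightarrow> \<exists>a b. a \<le> b \<and> b < length v \<and> v = vec (length v) a b"
proof -
  assume "sum_list v = 2"
  then obtain a b where h: "a \<le> b" "b < length v"
    "\<forall>t<length v. v!t = (if t = a then 1 else 0) + (if t = b then 1 else 0)"
    using sum2 by blast
  have "v = vec (length v) a b" unfolding vec_def using h(3) by (intro nth_equalityI) auto
  then show ?thesis using h by blast
qed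

lemma expressions_char:
  "expressions us M = {vec (length us) a b | a b. a \<le> b \<and> b < length us \<and> us!a + us!b = M}"
proof -
  have "sum_list (vec q a b) = 2" if "a \<le> b" "b < q" for q a b
  proof -
    have "sum_list (vec q a b) = (\<Sum>t\<in>{0..<q}. (if t = a then 1 else 0) + (if t = b then (1::nat) else 0))"
      unfolding vec_def by (simp add: sum_set_upt_conv_sum_list_nat[symmetric])
    also have "\<dots> = 2" using that by (simp add: sum.distrib)
    finally show ?thesis .
  qed
  then show ?thesis unfolding expressions_def
    by (auto simp: expr_vec vec_def[symmetric] dest!: sum2_vec) (auto simp: vec_def)
qed



lemma pvc_mono: "path_vertex_cover m D \<Longrightarrow> D \<subseteq> C \<Longrightarrow> C \<subseteq> {1..m} \<Longrightarrow> path_vertex_cover m C"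
  unfolding path_vertex_cover_def by blast

lemma pmvc_iff: "path_min_vertex_cover m C \<longleftrightarrow> path_vertex_cover m C \<and> (\<forall>c\<in>C. \<not> path_vertex_cover m (C - {c}))"
proof
  assume "path_min_vertex_cover m C" then show "path_vertex_cover m C \<and> (\<forall>c\<in>C. \<not> path_vertex_cover m (C - {c}))"
    unfolding path_min_vertex_cover_def by blast
next
  assume h: "path_vertex_cover m C \<and> (\<forall>c\<in>C. \<not> path_vertex_cover m (C - {c}))"
  show "path_min_vertex_cover m C" unfolding path_min_vertex_cover_def
  proof (intro conjI allI impI)
    fix D assume "D \<subset> C"
    then obtain c where c: "c \<in> C" "D \<subseteq> C - {c}" by blast
    have "C \<subseteq> {1..m}" using h unfolding path_vertex_cover_def by blast
    then show "\<not> path_vertex_cover m D" using h c pvc_mono[of m D "C - {c}"] by blast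
  qed (use h in blast)
qed

lemma step1:
  assumes "path_min_vertex_cover (k+3) C"
  shows "path_min_vertex_cover (k+5) (insert (k+4) C)"
proof -
  have C: "C \<subseteq> {1..k+3}" "\<forall>i. 1 \<le> i \<and> i < k+3 \<longrightarrow> i \<in> C \<or> Suc i \<in> C"
     "\<forall>c\<in>C. \<not> path_vertex_cover (k+3) (C - {c})"
    using assms unfolding pmvc_iff path_vertex_cover_def by auto
  have cov: "path_vertex_cover (k+5) (insert (k+4) C)"
    unfolding path_vertex_cover_def using C(1,2)
    by auto
  have "\<not> path_vertex_cover (k+5) (insert (k+4) C - {c})" if c: "c \<in> insert (k+4) C" for c
  proof
    assume h: "path_vertex_cover (k+5) (insert (k+4) C - {c})"
    show False
    proof (cases "c = k+4")
      case True
      have "Suc (k+4) \<notin> C" "k+4 \<notin> C" using C(1) by auto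
      then have "k+4 \<notin> insert (k+4) C - {c}" "Suc (k+4) \<notin> insert (k+4) C - {c}" using True by auto
      moreover have "k+4 \<in> insert (k+4) C - {c} \<or> Suc (k+4) \<in> insert (k+4) C - {c}"
        using h unfolding path_vertex_cover_def by (drule_tac conjunct2, drule_tac spec[of _ "k+4"]) (simp del: add_Suc_right)
      ultimately show False by simp
    next
      case False
      then have cC: "c \<in> C" using c by auto
      have "c \<noteq> k+4" using cC C(1) by auto
      have "path_vertex_cover (k+3) (C - {c})"
        unfolding path_vertex_cover_def
      proof (intro conjI allI impI)
        show "C - {c} \<subseteq> {1..k+3}" using C(1) by auto
        fix i assume "1 \<le> i \<and> i < k+3"
        then have "i \<in> insert (k+4) C - {c} \<or> Suc i \<in> insert (k+4) C - {c}"
          using h unfolding path_vertex_cover_def by auto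
        then show "i \<in> C - {c} \<or> Suc i \<in> C - {c}" using \<open>1 \<le> i \<and> i < k+3\<close> by auto
      qed
      then show False using C(3) cC by blast
    qed
  qed
  then show ?thesis using cov unfolding pmvc_iff by blast
qed

lemma step2:
  assumes "path_min_vertex_cover (k+2) C"
  shows "path_min_vertex_cover (k+5) (insert (k+5) (insert (k+3) C))"
proof -
  have C: "C \<subseteq> {1..k+2}" "\<forall>i. 1 \<le> i \<and> i < k+2 \<longrightarrow> i \<in> C \<or> Suc i \<in> C"
     "\<forall>c\<in>C. \<not> path_vertex_cover (k+2) (C - {c})"
    using assms unfolding pmvc_iff path_vertex_cover_def by auto
  have cov: "path_vertex_cover (k+5) (insert (k+5) (insert (k+3) C))"
    unfolding path_vertex_cover_def using C(1,2)
    by auto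
  have "\<not> path_vertex_cover (k+5) (insert (k+5) (insert (k+3) C) - {c})" if c: "c \<in> insert (k+5) (insert (k+3) C)" for c
  proof
    assume h: "path_vertex_cover (k+5) (insert (k+5) (insert (k+3) C) - {c})"
    have nC: "Suc (k+4) \<notin> C" "k+4 \<notin> C" "Suc (k+3) \<notin> C" "k+3 \<notin> C" using C(1) by auto
    have e4: "k+4 \<in> insert (k+5) (insert (k+3) C) - {c} \<or> Suc (k+4) \<in> insert (k+5) (insert (k+3) C) - {c}"
        using h unfolding path_vertex_cover_def by (drule_tac conjunct2, drule_tac spec[of _ "k+4"]) (simp del: add_Suc_right)
    have e3: "k+3 \<in> insert (k+5) (insert (k+3) C) - {c} \<or> Suc (k+3) \<in> insert (k+5) (insert (k+3) C) - {c}"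
        using h unfolding path_vertex_cover_def by (drule_tac conjunct2, drule_tac spec[of _ "k+3"]) (simp del: add_Suc_right)
    show False
    proof (cases "c = k+5 \<or> c = k+3")
      case True
      then show False using e4 e3 nC by (auto simp del: add_Suc_right)
    next
      case False
      then have cC: "c \<in> C" using c by auto
      have "path_vertex_cover (k+2) (C - {c})"
        unfolding path_vertex_cover_def
      proof (intro conjI allI impI)
        show "C - {c} \<subseteq> {1..k+2}" using C(1) by auto
        fix i assume "1 \<le> i \<and> i < k+2"
        then have "i \<in> insert (k+5) (insert (k+3) C) - {c} \<or> Suc i \<in> insert (k+5) (insert (k+3) C) - {c}"
          using h unfolding path_vertex_cover_def by auto
        then show "i \<in> C - {c} \<or> Suc i \<in> C - {c}" using \<open>1 \<le> i \<and> i < k+2\<close> by auto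
      qed
      then show False using C(3) cC by blast
    qed
  qed
  then show ?thesis using cov unfolding pmvc_iff by blast
qed

lemma pvc_small: "path_vertex_cover m C \<longleftrightarrow> C \<subseteq> {1..m} \<and> (\<forall>i\<in>{1..<m}. i \<in> C \<or> Suc i \<in> C)"
  unfolding path_vertex_cover_def by auto

lemma small_ivs: "{Suc 0..<2} = {1}" "{Suc 0..<3} = {1,2}" "{Suc 0..<4} = {1,2,3}"

  by auto

lemma conc2: "path_min_vertex_cover 2 {1}" "path_min_vertex_cover 2 {2}"
  by (auto simp: pmvc_iff pvc_small small_ivs)
lemma conc3: "path_min_vertex_cover 3 {2}" "path_min_vertex_cover 3 {1,3}"
  by (auto simp: pmvc_iff pvc_small small_ivs)
lemma conc4: "path_min_vertex_cover 4 {1,3}" "path_min_vertex_cover 4 {2,3}" "path_min_vertex_cover 4 {2,4}"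
  by (auto simp: pmvc_iff pvc_small small_ivs)

lemma rooted_GJ: "u \<in> set (rooted m) \<Longrightarrow> \<exists>C. u = mset_set C \<and> finite C \<and> path_min_vertex_cover m C"
proof (induction m arbitrary: u rule: rooted.induct)
  case 3
  have e: "Suc (Suc 0) = (2::nat)" by simp
  from 3 have "u = mset_set {1} \<or> u = mset_set {2}" by auto
  then show ?case
  proof
    assume "u = mset_set {1}" then show ?case unfolding e using conc2(1) by (intro exI[of _ "{1}"]) blast
  next
    assume "u = mset_set {2}" then show ?case unfolding e using conc2(2) by (intro exI[of _ "{2}"]) blast
  qed
next
  case 4
  have e: "Suc (Suc (Suc 0)) = (3::nat)" by simp
  from 4 have "u = mset_set {2} \<or> u = mset_set {1,3}" by auto
  then show ?case
  proof
    assume "u = mset_set {2}" then show ?case unfolding e using conc3(1) by (intro exI[of _ "{2}"]) blast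
  next
    assume "u = mset_set {1,3}" then show ?case unfolding e using conc3(2) by (intro exI[of _ "{1,3}"]) blast
  qed
next
  case 5
  have e: "Suc (Suc (Suc (Suc 0))) = (4::nat)" by simp
  from 5 have "u = mset_set {1,3} \<or> u = mset_set {2,3} \<or> u = mset_set {2,4}" by auto
  then show ?case
  proof (elim disjE)
    assume "u = mset_set {1,3}" then show ?case unfolding e using conc4(1) by (intro exI[of _ "{1,3}"]) blast
  next
    assume "u = mset_set {2,3}" then show ?case unfolding e using conc4(2) by (intro exI[of _ "{2,3}"]) blast
  next
    assume "u = mset_set {2,4}" then show ?case unfolding e using conc4(3) by (intro exI[of _ "{2,4}"]) blast
  qed
next
  case (6 k)
  have e: "Suc (Suc (Suc (Suc (Suc k)))) = k+5" by simp
  from "6.prems" consider (a) u' where "u' \<in> set (rooted (k+3))" "u = add_mset (k+4) u'"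
    | (b) v where "v \<in> set (rooted (k+2))" "u = {#k+5, k+3#} + v" by auto
  then show ?case
  proof cases
    case a
    then obtain C where C: "u' = mset_set C" "finite C" "path_min_vertex_cover (k+3) C" using "6.IH"(1) by blast
    have "k+4 \<notin> C" using C(3) unfolding path_min_vertex_cover_def path_vertex_cover_def by auto
    then have "u = mset_set (insert (k+4) C)" using a C by simp
    moreover have "finite (insert (k+4) C)" using C(2) by simp
    ultimately show ?thesis unfolding e using step1[OF C(3)] by blast
  next
    case b
    then obtain C where C: "v = mset_set C" "finite C" "path_min_vertex_cover (k+2) C" using "6.IH"(2) by blast
    have "k+3 \<notin> C" "k+5 \<notin> C" using C(3) unfolding path_min_vertex_cover_def path_vertex_cover_def by auto
    then have "u = mset_set (insert (k+5) (insert (k+3) C))" using b C by simp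
    moreover have "finite (insert (k+5) (insert (k+3) C))" using C(2) by simp
    ultimately show ?thesis unfolding e using step2[OF C(3)] by blast
  qed
qed auto



lemma rooted_Suc5: "rooted (k+5) = map (\<lambda>u. add_mset (k+4) u) (rooted (k+3)) @ map (\<lambda>v. {#k+5, k+3#} + v) (rooted (k+2))"
proof -
  have e: "Suc (Suc (Suc (Suc (Suc k)))) = k+5" by simp
  show ?thesis using rooted.simps(6)[of k] by (simp only: e)
qed

lemma rooted4: "\<exists>D. rooted (m+4) = map (add_mset (m+3)) (rooted (m+2)) @ D \<and> (\<forall>u\<in>set D. m+4 \<in># u)"
proof (cases m)
  case 0
  have e: "(0::nat)+4 = Suc (Suc (Suc (Suc 0)))" "(0::nat)+2 = Suc (Suc 0)" by simp_all
  show ?thesis unfolding 0 e by (intro exI[of _ "[{#2,4#}]"]) simp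
next
  case (Suc m')
  have "m+4 = m'+5" using Suc by simp
  then have "rooted (m+4) = rooted (m'+5)" by (simp only:)
  also have "\<dots> = map (add_mset (m'+4)) (rooted (m'+3)) @ map (\<lambda>v. {#m'+5, m'+3#} + v) (rooted (m'+2))"
    by (rule rooted_Suc5)
  also have "m'+4 = m+3" "m'+3 = m+2" using Suc by simp_all
  then have "map (add_mset (m'+4)) (rooted (m'+3)) = map (add_mset (m+3)) (rooted (m+2))" by (simp only:)
  finally show ?thesis using Suc by (intro exI[of _ "map (\<lambda>v. {#m'+5, m'+3#} + v) (rooted (m'+2))"]) auto
qed

lemma finite_expr: "finite (expressions us X)"
proof -
  have "expressions us X \<subseteq> (\<lambda>(a,b). vec (length us) a b) ` ({..<length us} \<times> {..<length us})"
    unfolding expressions_char by auto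
  then show ?thesis by (rule finite_subset) auto
qed

lemma rooted_vars: "u \<in> set (rooted m) \<Longrightarrow> set_mset u \<subseteq> {1..m}"
  using rooted_GJ[of u m] unfolding path_min_vertex_cover_def path_vertex_cover_def by auto

lemma rooted_GJ': "u \<in> set (rooted m) \<Longrightarrow> u \<in> GJ m"
  using rooted_GJ[of u m] unfolding GJ_def by auto



lemma main3p16:
  fixes m i j k l :: nat
  defines "L \<equiv> rooted (m+2)" and "w \<equiv> {#m+7, m+6, m+5, m+5, m+3, m+3#}"
  assumes ij: "i < length L" "j < length L" "k < length L" "l < length L"
    and gt: "R_greater (m+2) (L!i + L!k) (L!j + L!l)"
  shows "w + (L!i + L!k) \<in> FJ2 (m+7) \<and> w + (L!j + L!l) \<in> FJ2 (m+7) \<and>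
         R_greater (m+7) (w + (L!i + L!k)) (w + (L!j + L!l))"
proof -
  obtain D where D: "rooted (m+4) = map (add_mset (m+3)) L @ D" "\<forall>u\<in>set D. m+4 \<in># u"
    using rooted4[of m] unfolding L_def by blast
  define A where "A = map (\<lambda>u. add_mset (m+6) (add_mset (m+4) u)) (rooted (m+3))"
  define B where "B = map (\<lambda>u. add_mset (m+6) ({#m+5, m+3#} + u)) L"
  define C where "C = map (\<lambda>u. {#m+7, m+5#} + add_mset (m+3) u) L"
  define D' where "D' = map (\<lambda>v. {#m+7, m+5#} + v) D"
  define R where "R = rooted (m+7)"
  have R: "R = A @ B @ C @ D'"
  proof -
    have "R = map (add_mset (m+6)) (rooted (m+5)) @ map (\<lambda>v. {#m+7, m+5#} + v) (rooted (m+4))"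
    proof -
      have e: "m+2+5 = m+7" "m+2+4 = m+6" "m+2+3 = m+5" "m+2+2 = m+4" by simp_all
      show ?thesis unfolding R_def using rooted_Suc5[of "m+2", unfolded e] by (simp only:)
    qed
    also have "rooted (m+5) = map (add_mset (m+4)) (rooted (m+3)) @ map (\<lambda>v. {#m+5, m+3#} + v) L"
      unfolding L_def by (rule rooted_Suc5)
    finally show ?thesis unfolding A_def B_def C_def D'_def D(1) by simp
  qed
  define p where "p = length L"
  define oo where "oo = length A"
  define Q where "Q = length R"
  have Q: "Q = oo + p + p + length D"
    unfolding Q_def oo_def p_def R B_def C_def D'_def by simp
  have Lv: "set_mset (L!c) \<subseteq> {1..m+2}" if "c < p" for c
    using rooted_vars[of "L!c" "m+2"] that unfolding p_def L_def by simp
  have Lc: "count (L!c) x = 0" if "c < p" "x > m+2" for c x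
    using Lv[OF that(1)] that(2) by (metis atLeastAtMost_iff count_eq_zero_iff not_le subset_iff)
  have RB: "R!(oo+c) = add_mset (m+6) ({#m+5, m+3#} + L!c)" if "c < p" for c
    using that unfolding R oo_def p_def B_def by (simp add: nth_append)
  have RC: "R!(oo+p+c) = {#m+7, m+5#} + add_mset (m+3) (L!c)" if "c < p" for c
    using that unfolding R oo_def p_def B_def C_def by (simp add: nth_append)
  have RA: "m+4 \<in># R!s" if "s < oo" for s
    using that unfolding R oo_def A_def by (simp add: nth_append)
  have RD: "m+4 \<in># R!s" if "oo+p+p \<le> s" "s < Q" for s
  proof -
    have len: "length (A@B@C) = oo+p+p" unfolding oo_def p_def B_def C_def by simp
    have "R!s = ((A@B@C)@D')!s" using R by simp
    also have "\<dots> = D'!(s - length (A@B@C))" using that len by (simp only: nth_append) simp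
    finally have "R!s = D'!(s-(oo+p+p))" using len by simp
    moreover have "s-(oo+p+p) < length D" using that Q by simp
    ultimately show ?thesis using D(2) nth_mem unfolding D'_def by fastforce
  qed
  have wsplit: "add_mset (m+6) ({#m+5, m+3#} + X) + ({#m+7, m+5#} + add_mset (m+3) Y) = w + (X + Y)" for X Y
    unfolding w_def by (simp add: add_mset_commute)
  have RGJ: "R!s \<in> GJ (m+7)" if "s < Q" for s
    using rooted_GJ' nth_mem that unfolding Q_def R_def by blast
  have FJ: "w + (L!c + L!d) \<in> FJ2 (m+7)" if "c < p" "d < p" for c d
  proof -
    have "w + (L!c + L!d) = R!(oo+c) + R!(oo+p+d)" using RB RC that wsplit by simp
    moreover have "oo+c < Q" "oo+p+d < Q" using that Q by simp_all
    ultimately show ?thesis unfolding FJ2_def using RGJ by blast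
  qed
  have key: "\<exists>c d. c < p \<and> d < p \<and> s = oo+c \<and> t = oo+p+d \<and> L!c + L!d = N"
    if st: "s \<le> t" "t < Q" "R!s + R!t = w + N" and Nv: "set_mset N \<subseteq> {1..m+2}" for s t N
  proof -
    have cN: "count N x = 0" if "x > m+2" for x
      using Nv that by (metis atLeastAtMost_iff count_eq_zero_iff not_le subset_iff)
    have c4: "count (R!s) (m+4) + count (R!t) (m+4) = 0"
      using arg_cong[OF st(3), of "\<lambda>M. count M (m+4)"] cN[of "m+4"] unfolding w_def by simp
    have c6: "count (R!s) (m+6) + count (R!t) (m+6) = 1"
      using arg_cong[OF st(3), of "\<lambda>M. count M (m+6)"] cN[of "m+6"] unfolding w_def by simp
    have c7: "count (R!s) (m+7) + count (R!t) (m+7) = 1"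
      using arg_cong[OF st(3), of "\<lambda>M. count M (m+7)"] cN[of "m+7"] unfolding w_def by simp
    have notA: "\<not> x < oo" if "x = s \<or> x = t" for x
      using RA[of x] c4 that by (auto simp: count_eq_zero_iff)
    have notD: "\<not> oo+p+p \<le> x" if "x = s \<or> x = t" for x
      using RD[of x] c4 that st by (auto simp: count_eq_zero_iff)
    have inB6: "count (R!x) (m+6) \<ge> 1" if "oo \<le> x" "x < oo+p" for x
      using RB[of "x-oo"] that by simp
    have inC7: "count (R!x) (m+7) \<ge> 1" if "oo+p \<le> x" "x < oo+p+p" for x
      using RC[of "x-oo-p"] that by simp
    have sB: "s < oo+p"
    proof (rule ccontr)
      assume "\<not> s < oo+p"
      then have "count (R!s) (m+7) \<ge> 1" "count (R!t) (m+7) \<ge> 1"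
        using inC7[of s] inC7[of t] notD[of s] notD[of t] st by auto
      then show False using c7 by linarith
    qed
    have tC: "oo+p \<le> t"
    proof (rule ccontr)
      assume "\<not> oo+p \<le> t"
      then have "count (R!s) (m+6) \<ge> 1" "count (R!t) (m+6) \<ge> 1"
        using inB6[of s] inB6[of t] notA[of s] notA[of t] st by auto
      then show False using c6 by linarith
    qed
    define c where "c = s - oo"
    define d where "d = t - oo - p"
    have cd: "c < p" "d < p" "s = oo+c" "t = oo+p+d"
      using sB tC notA[of s] notD[of t] unfolding c_def d_def by auto
    have "R!s + R!t = w + (L!c + L!d)" unfolding cd(3,4) RB[OF cd(1)] RC[OF cd(2)] wsplit ..
    then have "w + (L!c + L!d) = w + N" using st(3) by simp
    then have "L!c + L!d = N" by simp
    then show ?thesis using cd by blast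
  qed
  define M where "M = L!i + L!k"
  define N where "N = L!j + L!l"
  have ijp: "i < p" "j < p" "k < p" "l < p" using ij unfolding p_def by auto
  have Nv: "set_mset N \<subseteq> {1..m+2}" unfolding N_def using Lv[OF ijp(2)] Lv[OF ijp(4)] by auto
  have EL: "expressions L X = {vec p a b | a b. a \<le> b \<and> b < p \<and> L!a + L!b = X}" for X
    unfolding expressions_char p_def ..
  have ER: "expressions R X = {vec Q a b | a b. a \<le> b \<and> b < Q \<and> R!a + R!b = X}" for X
    unfolding expressions_char Q_def ..
  have minmax: "L!(min a b) + L!(max a b) = L!a + L!b" for a b
    by (cases "a \<le> b") (auto simp: min_def max_def add.commute)
  have inEL: "vec p (min a b) (max a b) \<in> expressions L (L!a + L!b)" if "a < p" "b < p" for a b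
    unfolding EL mem_Collect_eq using that minmax[of a b]
    by (intro exI[of _ "min a b"] exI[of _ "max a b"]) auto
  obtain a1 b1 where ab1: "Max (expressions L M) = vec p a1 b1" "a1 \<le> b1" "b1 < p" "L!a1 + L!b1 = M"
  proof -
    have "Max (expressions L M) \<in> expressions L M"
      using inEL[OF ijp(1,3)] finite_expr unfolding M_def by (intro Max_in) auto
    then show ?thesis using that unfolding EL by blast
  qed
  obtain a2 b2 where ab2: "Max (expressions L N) = vec p a2 b2" "a2 \<le> b2" "b2 < p" "L!a2 + L!b2 = N"
  proof -
    have "Max (expressions L N) \<in> expressions L N"
      using inEL[OF ijp(2,4)] finite_expr unfolding N_def by (intro Max_in) auto
    then show ?thesis using that unfolding EL by blast
  qed
  have "vec p a2 b2 < vec p a1 b1"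
    using gt ab1(1) ab2(1) unfolding R_greater_def max_expr_def M_def N_def L_def by simp
  then have lt12: "a1 < a2 \<or> (a1 = a2 \<and> b1 < b2)"
    using vec_less_iff[of a2 b2 p a1 b1] ab1 ab2 by auto
  define x where "x = vec Q (oo+a1) (oo+p+b1)"
  have xin: "x \<in> expressions R (w + M)"
  proof -
    have "R!(oo+a1) + R!(oo+p+b1) = w + M"
      unfolding RB[OF order.strict_trans1[OF ab1(2,3)]] RC[OF ab1(3)] wsplit ab1(4) ..
    moreover have "oo+a1 \<le> oo+p+b1" "oo+p+b1 < Q" using ab1 Q by auto
    ultimately show ?thesis unfolding ER x_def by blast
  qed
  have yin: "vec Q (oo+j) (oo+p+l) \<in> expressions R (w + N)"
  proof -
    have "R!(oo+j) + R!(oo+p+l) = w + N"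
      unfolding RB[OF ijp(2)] RC[OF ijp(4)] wsplit N_def ..
    moreover have "oo+j \<le> oo+p+l" "oo+p+l < Q" using ijp Q by auto
    ultimately show ?thesis unfolding ER by blast
  qed
  obtain s t where st: "Max (expressions R (w+N)) = vec Q s t" "s \<le> t" "t < Q" "R!s + R!t = w + N"
  proof -
    have "Max (expressions R (w+N)) \<in> expressions R (w+N)"
      using yin finite_expr by (intro Max_in) auto
    then show ?thesis using that unfolding ER by blast
  qed
  obtain c d where cd: "c < p" "d < p" "s = oo+c" "t = oo+p+d" "L!c + L!d = N"
    using key[OF st(2,3,4) Nv] by blast
  have "vec p (min c d) (max c d) \<le> Max (expressions L N)"
    using inEL[OF cd(1,2)] cd(5) finite_expr by (intro Max_ge) auto
  then have "vec p (min c d) (max c d) < vec p a1 b1"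
    using \<open>vec p a2 b2 < vec p a1 b1\<close> ab2(1) by simp
  then have "a1 < min c d \<or> (a1 = min c d \<and> b1 < max c d)"
    using vec_less_iff[of "min c d" "max c d" p a1 b1] ab1 cd by auto
  then have "a1 < c \<or> (a1 = c \<and> b1 < d)" by (auto simp: min_def max_def split: if_splits)
  then have ylt: "vec Q s t < x"
    unfolding x_def cd(3,4) using ab1 cd Q by (intro vec_less) auto
  have "x \<le> Max (expressions R (w+M))"
    using xin finite_expr by (intro Max_ge) auto
  then have "Max (expressions R (w+N)) < Max (expressions R (w+M))"
    using ylt st(1) by simp
  then have "R_greater (m+7) (w + M) (w + N)"
    unfolding R_greater_def max_expr_def R_def .
  then show ?thesis using FJ[OF ijp(1,3)] FJ[OF ijp(2,4)] unfolding M_def N_def by blast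
qed

theorem lemma3p16:
  fixes n i j k l :: nat
  assumes "n \<ge> 7"
    and "i < length (rooted (n - 5))" "j < length (rooted (n - 5))"
    and "k < length (rooted (n - 5))" "l < length (rooted (n - 5))"
    and "rooted (n - 5) ! i + rooted (n - 5) ! k \<in> FJ2 (n - 5)"
    and "rooted (n - 5) ! j + rooted (n - 5) ! l \<in> FJ2 (n - 5)"
    and "R_greater (n - 5) (rooted (n - 5) ! i + rooted (n - 5) ! k)
                           (rooted (n - 5) ! j + rooted (n - 5) ! l)"
  shows "let w = {#n, n - 1, n - 2, n - 2, n - 4, n - 4#} in
           w + (rooted (n - 5) ! i + rooted (n - 5) ! k) \<in> FJ2 n \<and>
           w + (rooted (n - 5) ! j + rooted (n - 5) ! l) \<in> FJ2 n \<and>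
           R_greater n (w + (rooted (n - 5) ! i + rooted (n - 5) ! k))
                       (w + (rooted (n - 5) ! j + rooted (n - 5) ! l))"
  proof -
  obtain m where n: "n = m + 7" using assms(1) by (metis add.commute le_Suc_ex)
  have e: "n - 5 = m+2" "n - 1 = m+6" "n - 2 = m+5" "n - 4 = m+3" using n by simp_all
  have "let L = rooted (m+2); w = {#m+7, m+6, m+5, m+5, m+3, m+3#} in
        w + (L!i + L!k) \<in> FJ2 (m+7) \<and> w + (L!j + L!l) \<in> FJ2 (m+7) \<and>
         R_greater (m+7) (w + (L!i + L!k)) (w + (L!j + L!l))"
    unfolding Let_def
    by (rule main3p16[where m=m and i=i and j=j and k=k and l=l]) (use assms(2-5,8) e in simp_all)
  then show ?thesis unfolding Let_def e by (simp add: n)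
qed

end
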